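(* The following hold: \begin{equation*} \frac{V(n,x)}{V (n-1,x)}<\frac{x+\sqrt{4n-2+x^2}}{2},\quad x>0,\ n\in (2k-1,2k),\ k\in {\mathbb N}; \end{equation*} \begin{equation*} \frac{x+\sqrt{4n-6+x^2}}{2}<\frac{V(n,x)}{V (n-1,x)},\quad x>0,\ n\in (2k,2k+1),\ k\in {\mathbb N}; \end{equation*} \begin{equation*} -i\frac{H_{2k+1}(ix)}{H_{2k}(ix)}<x+\sqrt{4k+2+x^2},\quad x>0,\ k =0,1,2,\ldots; \end{equation*} \begin{equation*} i\frac{H_{2k-1}(ix)}{H_{2k}(ix)}<(x+\sqrt{4k-2+x^2})^{-1},\quad x>0,\ k\in{\mathbb N}; \end{equation*} \begin{equation*} \frac{H_{2k}(ix)^2}{H_{2k-1}(ix)H_{2k+1}(ix)}>\sqrt{\frac{k-1/2}{k+1/2}},\quad k\in {\mathbb N},\ x\in {\mathbb R}. \end{equation*}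
   Context: $V(a,x)$ denotes the standard second parabolic cylinder function (as in the NIST Digital Library of Mathematical Functions, Chapter 12), a solution of $y''(x)-(x^2/4+a)y(x)=0$ that is dominant as $x\rightarrow+\infty$; $H_n$ denotes the Hermite polynomial of degree $n$ (with positive leading coefficient $2^n$), evaluated here at imaginary argument $ix$. The parameter $n$ is real and $i$ is the imaginary unit. *)

theory Defs
  imports "HOL-Analysis.Analysis"
begin

definition kummerM :: "real \<Rightarrow> real \<Rightarrow> real \<Rightarrow> real" where
  "kummerM a b z = (\<Sum>k. pochhammer a k / pochhammer b k * z ^ k / fact k)"

text \<open>Even and odd standard solutions of Weber's equation (DLMF 12.4, 12.7.12-13).\<close>
definition pcf_u1 :: "real \<Rightarrow> real \<Rightarrow> real" where
  "pcf_u1 a x = exp (- x\<^sup>2 / 4) * kummerM (a/2 + 1/4) (1/2) (x\<^sup>2 / 2)"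

definition pcf_u2 :: "real \<Rightarrow> real \<Rightarrow> real" where
  "pcf_u2 a x = x * exp (- x\<^sup>2 / 4) * kummerM (a/2 + 3/4) (3/2) (x\<^sup>2 / 2)"

text \<open>The second parabolic cylinder function V(a,x) (DLMF 12.4.2 with the initial values
  12.2.8, 12.2.9; 1/Gamma is written with the entire function rGamma).\<close>
definition pcfV :: "real \<Rightarrow> real \<Rightarrow> real" where
  "pcfV a x =
     pi * 2 powr (a/2 + 1/4) * rGamma (1/4 + a/2) * (rGamma (3/4 - a/2))\<^sup>2 * pcf_u1 a x
   + pi * 2 powr (a/2 + 3/4) * rGamma (3/4 + a/2) * (rGamma (1/4 - a/2))\<^sup>2 * pcf_u2 a x"

fun hermite :: "nat \<Rightarrow> complex \<Rightarrow> complex" where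
  "hermite 0 z = 1"
| "hermite (Suc 0) z = 2 * z"
| "hermite (Suc (Suc n)) z = 2 * z * hermite (Suc n) z - 2 * of_nat (Suc n) * hermite n z"

end

theory Submission
  imports Defs
begin


definition kc :: "real \<Rightarrow> real \<Rightarrow> nat \<Rightarrow> real" where
  "kc a b k = pochhammer a k / pochhammer b k / fact k"

lemma kummerM_eq: "kummerM a b z = (\<Sum>k. kc a b k * z^k)"
  unfolding kummerM_def kc_def by (simp add: field_simps)

lemma kc_Suc: "b > 0 \<Longrightarrow> kc a b (Suc k) = kc a b k * ((a + k) / ((b + k) * (k + 1)))"
  unfolding kc_def using pochhammer_pos[of b k]
  by (simp add: pochhammer_Suc field_simps)

lemma kc_summable:
  assumes b: "b > 0" shows "summable (\<lambda>k. kc a b k * z^k)"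
proof -
  define C where "C = \<bar>a\<bar> / b + 1"
  have C: "C \<ge> 1" using b by (simp add: C_def)
  define N where "N = nat \<lceil>2 * C * \<bar>z\<bar>\<rceil>"
  show ?thesis
  proof (rule summable_ratio_test[where c = "1/2" and N = N])
    fix n assume n: "n \<ge> N"
    have hN: "2 * C * \<bar>z\<bar> \<le> real n + 1" using n unfolding N_def by linarith
    have bn: "b + real n > 0" using b by simp
    have "\<bar>a + real n\<bar> \<le> C * (b + real n)"
    proof -
      have "\<bar>a + real n\<bar> \<le> \<bar>a\<bar> + real n" by simp
      also have "\<dots> \<le> C * (b + real n)" using b unfolding C_def
        by (simp add: field_simps)
      finally show ?thesis .
    qed
    hence "\<bar>a + real n\<bar> * \<bar>z\<bar> \<le> C * (b + real n) * \<bar>z\<bar>"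
      by (rule mult_right_mono) simp
    also have "\<dots> = (b + real n) * (C * \<bar>z\<bar>)" by simp
    also have "\<dots> \<le> (b + real n) * ((real n + 1) / 2)"
      using hN bn by (intro mult_left_mono) auto
    finally have r0: "\<bar>a + real n\<bar> * \<bar>z\<bar> \<le> (b + real n) * (real n + 1) / 2" by simp
    have r: "\<bar>a + real n\<bar> * \<bar>z\<bar> / ((b + real n) * (real n + 1)) \<le> 1/2"
      using r0 bn by (simp add: divide_simps)
    have "norm (kc a b (Suc n) * z ^ Suc n) =
          norm (kc a b n * z ^ n) * (\<bar>a + real n\<bar> * \<bar>z\<bar> / ((b + real n) * (real n + 1)))"
    proof -
      have "kc a b (Suc n) * z ^ Suc n = (kc a b n * z ^ n) * ((a + real n) * z / ((b + real n) * (real n + 1)))"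
        using b by (simp add: kc_Suc field_simps)
      thus ?thesis using bn by (simp add: abs_mult)
    qed
    also have "\<dots> \<le> norm (kc a b n * z ^ n) * (1/2)"
      by (rule mult_left_mono[OF r]) simp
    finally show "norm (kc a b (Suc n) * z ^ Suc n) \<le> 1/2 * norm (kc a b n * z ^ n)" by simp
  qed simp
qed

lemma diffs_kc:
  assumes b: "b > 0" shows "diffs (kc a b) k = a / b * kc (a+1) (b+1) k"
proof -
  have p: "pochhammer (b+1) k \<noteq> 0" using b pochhammer_pos[of "b+1" k] by simp
  define m where "m = real k + 1"
  have m: "m \<noteq> 0" unfolding m_def by simp
  have f: "fact (Suc k) = m * (fact k :: real)" unfolding m_def by simp
  have fk: "fact k \<noteq> (0::real)" by simp
  have "diffs (kc a b) k = m * (a * pochhammer (a+1) k) / (b * pochhammer (b+1) k) / (m * fact k)"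
  proof -
    have s: "of_nat (Suc k) = m" unfolding m_def by simp
    show ?thesis unfolding diffs_def kc_def f pochhammer_rec[of a k] pochhammer_rec[of b k] s by simp
  qed
  also have "\<dots> = a / b * kc (a+1) (b+1) k"
    unfolding kc_def using b p fk m by (simp add: field_simps)
  finally show ?thesis .
qed

lemma kummerM_deriv:
  assumes "b > 0"
  shows "(kummerM a b has_real_derivative (a / b * kummerM (a+1) (b+1) z)) (at z)"
proof -
  have "((\<lambda>z. \<Sum>k. kc a b k * z^k) has_real_derivative (\<Sum>k. diffs (kc a b) k * z^k)) (at z)"
    by (rule termdiffs_strong_converges_everywhere) (rule kc_summable[OF assms])
  also have "(\<Sum>k. diffs (kc a b) k * z^k) = (\<Sum>k. a / b * (kc (a+1) (b+1) k * z^k))"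
    using assms by (simp add: diffs_kc mult.assoc)
  also have "\<dots> = a / b * kummerM (a+1) (b+1) z"
    unfolding kummerM_eq using assms by (subst suminf_mult) (auto intro: kc_summable)
  finally show ?thesis unfolding kummerM_eq[abs_def] .
qed



lemma diffs_kc': "b > 0 \<Longrightarrow> diffs (kc a b) k = a / b * kc (a+1) (b+1) k"
  by (rule diffs_kc)

lemma poch_half: "pochhammer (3/2::real) k = pochhammer (1/2) k * (2 * real k + 1)"
proof -
  have "pochhammer (1/2::real) (Suc k) = 1/2 * pochhammer (1/2 + 1) k" by (rule pochhammer_rec)
  moreover have "pochhammer (1/2::real) (Suc k) = pochhammer (1/2) k * (1/2 + real k)" by (rule pochhammer_Suc)
  ultimately show ?thesis by (simp add: field_simps)
qed

lemma poch_shift: "a * pochhammer (a+1) k = pochhammer a k * (a + real k)"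
  using pochhammer_rec[of a k] pochhammer_Suc[of a k] by simp

lemma C2: "(1 + 2 * real k) * kc b (3/2) k = kc b (1/2) k"
proof -
  define m where "m = 2 * real k + 1"
  have m: "m \<noteq> 0" unfolding m_def by (simp add: add_nonneg_pos)
  have p: "pochhammer (1/2::real) k \<noteq> 0" using pochhammer_pos[of "1/2::real" k] by simp
  have fk: "fact k \<noteq> (0::real)" by simp
  have "(1 + 2 * real k) * kc b (3/2) k = m * (pochhammer b k / (pochhammer (1/2) k * m) / fact k)"
  proof -
    have e: "1 + 2 * real k = m" unfolding m_def by simp
    show ?thesis unfolding kc_def poch_half m_def[symmetric] e by simp
  qed
  also have "\<dots> = kc b (1/2) k" unfolding kc_def using m p fk by (simp add: field_simps)
  finally show ?thesis .
qed

lemma C3: "2 * a * kc (a+1) (3/2) k - kc a (1/2) k = (2 * a - 1) * kc a (3/2) k"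
proof -
  define P where "P = pochhammer (3/2::real) k"
  have p: "P \<noteq> 0" unfolding P_def using pochhammer_pos[of "3/2::real" k] by simp
  have fk: "fact k \<noteq> (0::real)" by simp
  have "2 * a * kc (a+1) (3/2) k = 2 * (pochhammer a k * (a + real k)) / P / fact k"
    unfolding kc_def poch_shift[symmetric] P_def by simp
  moreover have "kc a (1/2) k = (1 + 2 * real k) * (pochhammer a k / P / fact k)"
    using C2[of k a] unfolding kc_def P_def by simp
  ultimately show ?thesis unfolding kc_def P_def[symmetric] using p fk by (simp add: field_simps)
qed

lemma C4: "kc b (1/2) (Suc j) - 2 * kc b (3/2) j = kc (b - 1) (1/2) (Suc j)"
proof -
  define P where "P = pochhammer (3/2::real) j"
  have p: "P \<noteq> 0" unfolding P_def using pochhammer_pos[of "3/2::real" j] by simp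
  have h1: "pochhammer (1/2::real) (Suc j) = P / 2"
    using pochhammer_rec[of "1/2::real" j] unfolding P_def by simp
  have h2: "pochhammer b (Suc j) = pochhammer b j * (b + real j)" by (rule pochhammer_Suc)
  have h3: "pochhammer (b - 1) (Suc j) = (b - 1) * pochhammer b j"
    using pochhammer_rec[of "b - 1" j] by simp
  define m where "m = real j + 1"
  have m: "m \<noteq> 0" unfolding m_def by simp
  have f: "fact (Suc j) = m * (fact j :: real)" unfolding m_def by simp
  have fk: "fact j \<noteq> (0::real)" by simp
  have e: "real j = m - 1" unfolding m_def by simp
  show ?thesis unfolding kc_def h1 h2 h3 f P_def[symmetric] e using p fk m by (simp add: field_simps)
qed



lemma zshift_sums:
  fixes c :: "nat \<Rightarrow> real"
  assumes "(\<lambda>k. c k * z^k) sums S"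
  shows "(\<lambda>k. (case k of 0 \<Rightarrow> 0 | Suc j \<Rightarrow> c j) * z^k) sums (z * S)"
proof -
  have "(\<lambda>k. z * (c k * z^k)) sums (z * S)" by (rule sums_mult[OF assms])
  hence "(\<lambda>k. (\<lambda>k. (case k of 0 \<Rightarrow> 0 | Suc j \<Rightarrow> c j) * z^k) (Suc k)) sums (z * S)"
    by (simp add: mult_ac)
  thus ?thesis by (subst (asm) sums_Suc_iff) simp
qed

lemma zdiffs_sums:
  fixes c :: "nat \<Rightarrow> real"
  assumes "(\<lambda>k. diffs c k * z^k) sums D"
  shows "(\<lambda>k. (of_nat k * c k) * z^k) sums (z * D)"
proof -
  have "(\<lambda>k. (case k of 0 \<Rightarrow> 0 | Suc j \<Rightarrow> diffs c j) * z^k) sums (z * D)"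
    by (rule zshift_sums[OF assms])
  also have "(\<lambda>k. (case k of 0 \<Rightarrow> 0 | Suc j \<Rightarrow> diffs c j) * z^k) = (\<lambda>k. (of_nat k * c k) * z^k)"
    by (rule ext, simp add: diffs_def split: nat.split)
  finally show ?thesis .
qed

lemma kM_sums: "b > 0 \<Longrightarrow> (\<lambda>k. kc a b k * z^k) sums kummerM a b z"
  unfolding kummerM_eq by (rule summable_sums[OF kc_summable])

lemma kMd_sums: "b > 0 \<Longrightarrow> (\<lambda>k. diffs (kc a b) k * z^k) sums (a / b * kummerM (a+1) (b+1) z)"
  using sums_mult[OF kM_sums[of "b+1" "a+1" z], of "a/b"]
  by (simp add: diffs_kc' mult_ac)

lemma I2: "kummerM c (3/2) z + 2 * z * (2 * c / 3 * kummerM (c+1) (5/2) z) = kummerM c (1/2) z"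
proof -
  have s1: "(\<lambda>k. kc c (3/2) k * z^k) sums kummerM c (3/2) z" by (rule kM_sums) simp
  have s2: "(\<lambda>k. (of_nat k * kc c (3/2) k) * z^k) sums (z * (2 * c / 3 * kummerM (c+1) (5/2) z))"
    using zdiffs_sums[OF kMd_sums[of "3/2" c z]] by (simp add: field_simps)
  have "(\<lambda>k. kc c (3/2) k * z^k + 2 * ((of_nat k * kc c (3/2) k) * z^k)) sums
        (kummerM c (3/2) z + 2 * (z * (2 * c / 3 * kummerM (c+1) (5/2) z)))"
    by (intro sums_add s1 sums_mult s2)
  also have "(\<lambda>k. kc c (3/2) k * z^k + 2 * ((of_nat k * kc c (3/2) k) * z^k)) = (\<lambda>k. kc c (1/2) k * z^k)"
    by (rule ext, subst C2[symmetric]) (simp add: algebra_simps)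
  finally have "(\<lambda>k. kc c (1/2) k * z^k) sums (kummerM c (3/2) z + 2 * (z * (2 * c / 3 * kummerM (c+1) (5/2) z)))" .
  from sums_unique2[OF this kM_sums] show ?thesis by (simp add: mult_ac)
qed

lemma I3: "2 * c * kummerM (c+1) (3/2) z - kummerM c (1/2) z = (2 * c - 1) * kummerM c (3/2) z"
proof -
  have "(\<lambda>k. 2 * c * (kc (c+1) (3/2) k * z^k) - kc c (1/2) k * z^k) sums
        (2 * c * kummerM (c+1) (3/2) z - kummerM c (1/2) z)"
    by (intro sums_diff sums_mult kM_sums) simp_all
  also have "(\<lambda>k. 2 * c * (kc (c+1) (3/2) k * z^k) - kc c (1/2) k * z^k) = (\<lambda>k. (2 * c - 1) * (kc c (3/2) k * z^k))"
  proof (rule ext)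
    fix k
    have "2 * c * (kc (c+1) (3/2) k * z^k) - kc c (1/2) k * z^k = (2 * c * kc (c+1) (3/2) k - kc c (1/2) k) * z^k"
      by (simp add: algebra_simps)
    also have "\<dots> = (2 * c - 1) * (kc c (3/2) k * z^k)" by (subst C3) (simp only: mult.assoc)
    finally show "2 * c * (kc (c+1) (3/2) k * z^k) - kc c (1/2) k * z^k = (2 * c - 1) * (kc c (3/2) k * z^k)" .
  qed
  finally have "(\<lambda>k. (2 * c - 1) * (kc c (3/2) k * z^k)) sums (2 * c * kummerM (c+1) (3/2) z - kummerM c (1/2) z)" .
  moreover have "(\<lambda>k. (2 * c - 1) * (kc c (3/2) k * z^k)) sums ((2 * c - 1) * kummerM c (3/2) z)"
    by (intro sums_mult kM_sums) simp
  ultimately show ?thesis by (rule sums_unique2)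
qed

lemma I4: "kummerM c (1/2) z - 2 * z * kummerM c (3/2) z = kummerM (c - 1) (1/2) z"
proof -
  have "(\<lambda>k. kc c (1/2) k * z^k - 2 * ((case k of 0 \<Rightarrow> 0 | Suc j \<Rightarrow> kc c (3/2) j) * z^k)) sums
        (kummerM c (1/2) z - 2 * (z * kummerM c (3/2) z))"
    by (intro sums_diff sums_mult kM_sums zshift_sums) simp_all
  also have "(\<lambda>k. kc c (1/2) k * z^k - 2 * ((case k of 0 \<Rightarrow> 0 | Suc j \<Rightarrow> kc c (3/2) j) * z^k)) =
             (\<lambda>k. kc (c - 1) (1/2) k * z^k)"
  proof (rule ext)
    fix k show "kc c (1/2) k * z^k - 2 * ((case k of 0 \<Rightarrow> 0 | Suc j \<Rightarrow> kc c (3/2) j) * z^k) =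
             kc (c - 1) (1/2) k * z^k"
    proof (cases k)
      case 0 thus ?thesis by (simp add: kc_def)
    next
      case (Suc j) thus ?thesis using C4[of c j] by (simp add: algebra_simps)
    qed
  qed
  finally have "(\<lambda>k. kc (c - 1) (1/2) k * z^k) sums (kummerM c (1/2) z - 2 * (z * kummerM c (3/2) z))" .
  from sums_unique2[OF this kM_sums] show ?thesis by (simp add: mult_ac)
qed



lemma kM_comp_deriv:
  assumes b: "b > 0"
  shows "((\<lambda>x. kummerM a b (x\<^sup>2/2)) has_real_derivative (a / b * kummerM (a+1) (b+1) (x\<^sup>2/2) * x)) (at x)"
proof -
  have "((\<lambda>x. x\<^sup>2/2) has_real_derivative x) (at x)" by (auto intro!: derivative_eq_intros)
  from DERIV_chain2[OF kummerM_deriv[OF b] this] show ?thesis .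
qed

lemma exp_deriv: "((\<lambda>x::real. exp (- x\<^sup>2 / 4)) has_real_derivative (exp (- x\<^sup>2 / 4) * (- x / 2))) (at x)"
  by (auto intro!: derivative_eq_intros simp: field_simps)

lemma u1_deriv_basic:
  "(pcf_u1 a has_real_derivative
     (exp (- x\<^sup>2 / 4) * (- x / 2) * kummerM (a/2 + 1/4) (1/2) (x\<^sup>2/2)
      + exp (- x\<^sup>2 / 4) * (2 * (a/2 + 1/4) * kummerM (a/2 + 1/4 + 1) (3/2) (x\<^sup>2/2) * x))) (at x)"
proof -
  have "((\<lambda>x. exp (- x\<^sup>2 / 4) * kummerM (a/2 + 1/4) (1/2) (x\<^sup>2/2)) has_real_derivative
     (exp (- x\<^sup>2 / 4) * (- x / 2) * kummerM (a/2 + 1/4) (1/2) (x\<^sup>2/2)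
      + exp (- x\<^sup>2 / 4) * ((a/2 + 1/4) / (1/2) * kummerM (a/2 + 1/4 + 1) (1/2 + 1) (x\<^sup>2/2) * x))) (at x)"
  proof (rule DERIV_cong[OF DERIV_mult'[OF exp_deriv kM_comp_deriv]])
  qed (simp_all add: algebra_simps)
  moreover have "(a/2 + 1/4) / (1/2) = 2 * (a/2 + 1/4)" "(1/2 + 1 :: real) = 3/2" by simp_all
  ultimately show ?thesis unfolding pcf_u1_def[abs_def] by simp
qed

lemma u2_deriv_basic:
  "(pcf_u2 a has_real_derivative
     (exp (- x\<^sup>2 / 4) * kummerM (a/2 + 3/4) (3/2) (x\<^sup>2/2)
      + x * (exp (- x\<^sup>2 / 4) * (- x / 2) * kummerM (a/2 + 3/4) (3/2) (x\<^sup>2/2)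
      + exp (- x\<^sup>2 / 4) * (2 * (a/2 + 3/4) / 3 * kummerM (a/2 + 3/4 + 1) (5/2) (x\<^sup>2/2) * x)))) (at x)"
proof -
  have "((\<lambda>x. x * (exp (- x\<^sup>2 / 4) * kummerM (a/2 + 3/4) (3/2) (x\<^sup>2/2))) has_real_derivative
     (1 * (exp (- x\<^sup>2 / 4) * kummerM (a/2 + 3/4) (3/2) (x\<^sup>2/2))
      + x * (exp (- x\<^sup>2 / 4) * (- x / 2) * kummerM (a/2 + 3/4) (3/2) (x\<^sup>2/2)
      + exp (- x\<^sup>2 / 4) * ((a/2 + 3/4) / (3/2) * kummerM (a/2 + 3/4 + 1) (3/2 + 1) (x\<^sup>2/2) * x)))) (at x)"
  proof (rule DERIV_cong[OF DERIV_mult'[OF DERIV_ident DERIV_mult'[OF exp_deriv kM_comp_deriv]]])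
  qed (simp_all add: algebra_simps)
  moreover have "(a/2 + 3/4) / (3/2) = 2 * (a/2 + 3/4) / 3" "(3/2 + 1 :: real) = 5/2" by simp_all
  ultimately show ?thesis unfolding pcf_u2_def[abs_def] by (simp add: mult.assoc)
qed

lemma u1_D7: "(pcf_u1 a has_real_derivative ((a + 1/2) * pcf_u2 (a+1) x - x/2 * pcf_u1 a x)) (at x)"
proof (rule DERIV_cong[OF u1_deriv_basic])
  have e: "(a+1)/2 + 3/4 = a/2 + 1/4 + 1" by (simp add: field_simps)
  show "exp (- x\<^sup>2 / 4) * (- x / 2) * kummerM (a/2 + 1/4) (1/2) (x\<^sup>2/2)
      + exp (- x\<^sup>2 / 4) * (2 * (a/2 + 1/4) * kummerM (a/2 + 1/4 + 1) (3/2) (x\<^sup>2/2) * x)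
      = (a + 1/2) * pcf_u2 (a+1) x - x/2 * pcf_u1 a x"
    unfolding pcf_u1_def pcf_u2_def e by (simp add: algebra_simps)
qed

lemma u1_D6: "(pcf_u1 a has_real_derivative (x/2 * pcf_u1 a x + (a - 1/2) * pcf_u2 (a-1) x)) (at x)"
proof (rule DERIV_cong[OF u1_deriv_basic])
  have e: "(a-1)/2 + 3/4 = a/2 + 1/4" by (simp add: field_simps)
  have I: "2 * (a/2 + 1/4) * kummerM (a/2 + 1/4 + 1) (3/2) (x\<^sup>2/2) = kummerM (a/2 + 1/4) (1/2) (x\<^sup>2/2) + (a - 1/2) * kummerM (a/2 + 1/4) (3/2) (x\<^sup>2/2)"
    using I3[of "a/2 + 1/4" "x\<^sup>2/2"] by (simp add: algebra_simps)
  show "exp (- x\<^sup>2 / 4) * (- x / 2) * kummerM (a/2 + 1/4) (1/2) (x\<^sup>2/2)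
      + exp (- x\<^sup>2 / 4) * (2 * (a/2 + 1/4) * kummerM (a/2 + 1/4 + 1) (3/2) (x\<^sup>2/2) * x)
      = x/2 * pcf_u1 a x + (a - 1/2) * pcf_u2 (a-1) x"
    unfolding pcf_u1_def pcf_u2_def e I by (simp add: algebra_simps)
qed

lemma u2_D7: "(pcf_u2 a has_real_derivative (pcf_u1 (a+1) x - x/2 * pcf_u2 a x)) (at x)"
proof (rule DERIV_cong[OF u2_deriv_basic])
  have e: "(a+1)/2 + 1/4 = a/2 + 3/4" by (simp add: field_simps)
  have I: "kummerM (a/2 + 3/4) (1/2) (x\<^sup>2/2) = kummerM (a/2 + 3/4) (3/2) (x\<^sup>2/2) + x\<^sup>2 * (2 * (a/2 + 3/4) / 3 * kummerM (a/2 + 3/4 + 1) (5/2) (x\<^sup>2/2))"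
    using I2[of "a/2 + 3/4" "x\<^sup>2/2"] by simp
  show "exp (- x\<^sup>2 / 4) * kummerM (a/2 + 3/4) (3/2) (x\<^sup>2/2)
      + x * (exp (- x\<^sup>2 / 4) * (- x / 2) * kummerM (a/2 + 3/4) (3/2) (x\<^sup>2/2)
      + exp (- x\<^sup>2 / 4) * (2 * (a/2 + 3/4) / 3 * kummerM (a/2 + 3/4 + 1) (5/2) (x\<^sup>2/2) * x))
      = pcf_u1 (a+1) x - x/2 * pcf_u2 a x"
    unfolding pcf_u1_def pcf_u2_def e I by (simp add: algebra_simps power2_eq_square)
qed

lemma u2_D6: "(pcf_u2 a has_real_derivative (x/2 * pcf_u2 a x + pcf_u1 (a-1) x)) (at x)"
proof (rule DERIV_cong[OF u2_deriv_basic])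
  have e: "(a-1)/2 + 1/4 = a/2 + 3/4 - 1" by (simp add: field_simps)
  have I: "kummerM (a/2 + 3/4 - 1) (1/2) (x\<^sup>2/2) = kummerM (a/2 + 3/4) (3/2) (x\<^sup>2/2) + x\<^sup>2 * (2 * (a/2 + 3/4) / 3 * kummerM (a/2 + 3/4 + 1) (5/2) (x\<^sup>2/2)) - x\<^sup>2 * kummerM (a/2 + 3/4) (3/2) (x\<^sup>2/2)"
    using I2[of "a/2 + 3/4" "x\<^sup>2/2"] I4[of "a/2 + 3/4" "x\<^sup>2/2"] by simp
  show "exp (- x\<^sup>2 / 4) * kummerM (a/2 + 3/4) (3/2) (x\<^sup>2/2)
      + x * (exp (- x\<^sup>2 / 4) * (- x / 2) * kummerM (a/2 + 3/4) (3/2) (x\<^sup>2/2)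
      + exp (- x\<^sup>2 / 4) * (2 * (a/2 + 3/4) / 3 * kummerM (a/2 + 3/4 + 1) (5/2) (x\<^sup>2/2) * x))
      = x/2 * pcf_u2 a x + pcf_u1 (a-1) x"
    unfolding pcf_u1_def pcf_u2_def e I by (simp add: algebra_simps power2_eq_square)
qed



definition pA :: "real \<Rightarrow> real" where
  "pA a = pi * 2 powr (a/2 + 1/4) * rGamma (1/4 + a/2) * (rGamma (3/4 - a/2))\<^sup>2"
definition pB :: "real \<Rightarrow> real" where
  "pB a = pi * 2 powr (a/2 + 3/4) * rGamma (3/4 + a/2) * (rGamma (1/4 - a/2))\<^sup>2"

lemma pcfV_AB: "pcfV a x = pA a * pcf_u1 a x + pB a * pcf_u2 a x"
  unfolding pcfV_def pA_def pB_def ..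

lemma AB1: "pB a = pA (a + 1)"
proof -
  have e1: "(a+1)/2 + 1/4 = a/2 + 3/4" and e2: "1/4 + (a+1)/2 = 3/4 + a/2"
    and e3: "3/4 - (a+1)/2 = 1/4 - a/2" by (simp_all add: field_simps)
  show ?thesis unfolding pA_def pB_def e1 e2 e3 ..
qed

lemma AB2: "pB (a + 1) = (a + 1/2) * pA a"
proof -
  define u where "u = 1/4 + a/2"
  have e1: "(a+1)/2 + 3/4 = u + 1" and e2: "3/4 + (a+1)/2 = u + 1"
    and e3: "1/4 - (a+1)/2 = - u" and e4: "a/2 + 1/4 = u" and e5: "3/4 - a/2 = 1 - u"
    and e6: "a + 1/2 = 2 * u"
    unfolding u_def by (simp_all add: field_simps)
  have r1: "rGamma u = u * rGamma (u + 1)" using rGamma_plus1[of u] by simp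
  have r2: "rGamma (- u) = (- u) * rGamma (1 - u)" using rGamma_plus1[of "- u"] by simp
  have p: "2 powr (u + 1) = 2 * 2 powr u" by (simp add: powr_add)
  show ?thesis unfolding pA_def pB_def e1 e2 e3 e4 e5 e6 u_def[symmetric] r1 r2 p
    by (simp add: algebra_simps power2_eq_square)
qed

lemma V_D7: "(pcfV a has_real_derivative (pcfV (a+1) x - x/2 * pcfV a x)) (at x)"
proof -
  have "((\<lambda>x. pA a * pcf_u1 a x + pB a * pcf_u2 a x) has_real_derivative
     (pA a * ((a + 1/2) * pcf_u2 (a+1) x - x/2 * pcf_u1 a x) + pB a * (pcf_u1 (a+1) x - x/2 * pcf_u2 a x))) (at x)"
    by (intro DERIV_add DERIV_cmult u1_D7 u2_D7)
  moreover have "pA a * ((a + 1/2) * pcf_u2 (a+1) x - x/2 * pcf_u1 a x) + pB a * (pcf_u1 (a+1) x - x/2 * pcf_u2 a x)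
     = pcfV (a+1) x - x/2 * pcfV a x"
    unfolding pcfV_AB AB2 AB1[of a] by (simp add: algebra_simps)
  ultimately show ?thesis unfolding pcfV_AB[abs_def] by simp
qed

lemma V_D6: "(pcfV a has_real_derivative (x/2 * pcfV a x + (a - 1/2) * pcfV (a - 1) x)) (at x)"
proof -
  have "((\<lambda>x. pA a * pcf_u1 a x + pB a * pcf_u2 a x) has_real_derivative
     (pA a * (x/2 * pcf_u1 a x + (a - 1/2) * pcf_u2 (a-1) x) + pB a * (x/2 * pcf_u2 a x + pcf_u1 (a-1) x))) (at x)"
    by (intro DERIV_add DERIV_cmult u1_D6 u2_D6)
  moreover have h1: "pB (a - 1) = pA a" using AB1[of "a - 1"] by simp
  moreover have h2: "pB a = (a - 1/2) * pA (a - 1)" using AB2[of "a - 1"] by (simp add: algebra_simps)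
  moreover have "pA a * (x/2 * pcf_u1 a x + (a - 1/2) * pcf_u2 (a-1) x) + pB a * (x/2 * pcf_u2 a x + pcf_u1 (a-1) x)
     = x/2 * pcfV a x + (a - 1/2) * pcfV (a - 1) x"
    unfolding pcfV_AB h1 h2 by (simp add: algebra_simps)
  ultimately show ?thesis unfolding pcfV_AB[abs_def] by simp
qed

lemma kummerM_0: "kummerM a b 0 = 1"
  unfolding kummerM_eq by (subst powser_zero) (simp add: kc_def)

lemma pcfV_0: "pcfV a 0 = pA a"
  unfolding pcfV_AB pcf_u1_def pcf_u2_def by (simp add: kummerM_0)

lemma kummerM_pos:
  assumes "a > 0" "b > 0" "z \<ge> 0" shows "kummerM a b z > 0"
  unfolding kummerM_eq
proof (rule suminf_pos2[where i = 0])
  show "summable (\<lambda>k. kc a b k * z ^ k)" by (rule kc_summable) (use assms in simp)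
  show "0 \<le> kc a b n * z ^ n" for n
    using assms pochhammer_pos[of b n] pochhammer_pos[of a n] unfolding kc_def by simp
qed (simp add: kc_def)

lemma rGamma_pos: "(x::real) > 0 \<Longrightarrow> rGamma x > 0"
  unfolding rGamma_inverse_Gamma using Gamma_real_pos[of x] by simp

lemma pA_nonneg: "a > -1/2 \<Longrightarrow> pA a \<ge> 0"
  unfolding pA_def using rGamma_pos[of "1/4 + a/2"] by (intro mult_nonneg_nonneg) auto

lemma pB_nonneg: "a > -1/2 \<Longrightarrow> pB a \<ge> 0"
  unfolding pB_def using rGamma_pos[of "3/4 + a/2"] by (intro mult_nonneg_nonneg) auto

lemma half_not_Int: "(1/2::real) \<notin> \<int>"
proof
  assume "(1/2::real) \<in> \<int>"
  then obtain m :: int where m: "(1/2::real) = of_int m" by (elim Ints_cases)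
  hence "of_int (2 * m) = (1::real)" by simp
  hence "2 * m = 1" by linarith
  thus False by presburger
qed

lemma pA_pB_pos: "a > -1/2 \<Longrightarrow> pA a > 0 \<or> pB a > 0"
proof (rule ccontr)
  assume a: "a > -1/2" and "\<not> (pA a > 0 \<or> pB a > 0)"
  hence "pA a = 0" "pB a = 0" using pA_nonneg[OF a] pB_nonneg[OF a] by auto
  moreover have "rGamma (1/4 + a/2) > 0" "rGamma (3/4 + a/2) > 0" using a by (intro rGamma_pos; simp)+
  ultimately have "rGamma (3/4 - a/2) = 0" "rGamma (1/4 - a/2) = 0"
    unfolding pA_def pB_def by auto
  hence "3/4 - a/2 \<in> \<int>" "1/4 - a/2 \<in> \<int>"
    by (auto simp: rGamma_eq_zero_iff elim: nonpos_Ints_cases)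
  hence "(3/4 - a/2) - (1/4 - a/2) \<in> \<int>" by (rule Ints_diff)
  thus False using half_not_Int by simp
qed

lemma u1_pos: "a > -1/2 \<Longrightarrow> pcf_u1 a x > 0"
  unfolding pcf_u1_def by (intro mult_pos_pos exp_gt_zero kummerM_pos) auto

lemma u2_pos: "a > -1/2 \<Longrightarrow> x > 0 \<Longrightarrow> pcf_u2 a x > 0"
  unfolding pcf_u2_def by (intro mult_pos_pos exp_gt_zero kummerM_pos) auto

lemma pcfV_pos: assumes "a > -1/2" "x > 0" shows "pcfV a x > 0"
proof -
  have "pA a * pcf_u1 a x \<ge> 0" "pB a * pcf_u2 a x \<ge> 0"
    using assms pA_nonneg[of a] pB_nonneg[of a] u1_pos[of a x] u2_pos[of a x] by simp_all
  moreover have "pA a * pcf_u1 a x > 0 \<or> pB a * pcf_u2 a x > 0"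
    using pA_pB_pos[OF assms(1)] u1_pos[OF assms(1)] u2_pos[OF assms] by auto
  ultimately show ?thesis unfolding pcfV_AB by linarith
qed



lemma first_zero:
  fixes g :: "real \<Rightarrow> real"
  assumes cont: "\<And>t. isCont g t" and g0: "g 0 > 0"
    and der: "\<And>t. t > 0 \<Longrightarrow> g t = 0 \<Longrightarrow> \<exists>D. (g has_real_derivative D) (at t) \<and> D > 0"
    and x: "x > 0"
  shows "g x > 0"
proof (rule ccontr)
  assume "\<not> g x > 0"
  hence gx: "g x \<le> 0" by simp
  have co: "continuous_on S g" for S using cont by (simp add: continuous_at_imp_continuous_on)
  define Z where "Z = {t \<in> {0..x}. g t = 0}"
  have "\<exists>t. 0 \<le> t \<and> t \<le> x \<and> g t = 0" using IVT2'[of g x 0 0, OF gx _ _ co] g0 x by simp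
  hence Zne: "Z \<noteq> {}" unfolding Z_def by auto
  have Zcl: "closed Z" unfolding Z_def by (intro continuous_closed_preimage_constant co) simp
  have Zbd: "bdd_below Z" unfolding Z_def by (rule bdd_belowI[of _ 0]) auto
  define t1 where "t1 = Inf Z"
  have t1Z: "t1 \<in> Z" unfolding t1_def by (rule closed_contains_Inf[OF Zne Zbd Zcl])
  hence gt1: "g t1 = 0" and t1ge: "t1 \<ge> 0" unfolding Z_def by auto
  have t1pos: "t1 > 0" using gt1 g0 t1ge by (cases "t1 = 0") auto
  have pos: "g t > 0" if tt: "0 \<le> t" "t < t1" for t
  proof (rule ccontr)
    assume "\<not> g t > 0"
    hence "g t \<le> 0" by simp
    then obtain u where u: "0 \<le> u" "u \<le> t" "g u = 0" using IVT2'[of g t 0 0, OF _ _ _ co] g0 tt(1) by auto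
    have "u \<in> Z" unfolding Z_def using u tt t1Z unfolding Z_def by auto
    hence "t1 \<le> u" unfolding t1_def by (rule cInf_lower[OF _ Zbd])
    thus False using u tt by simp
  qed
  obtain D where D: "(g has_real_derivative D) (at t1)" "D > 0" using der[OF t1pos gt1] by blast
  obtain d where d: "d > 0" "\<And>h. h > 0 \<Longrightarrow> h < d \<Longrightarrow> g (t1 - h) < g t1"
    using DERIV_pos_inc_left[OF D] by blast
  define h where "h = min (d/2) (t1/2)"
  have "g (t1 - h) < 0" using d(2)[of h] d(1) t1pos gt1 unfolding h_def by auto
  moreover have "g (t1 - h) > 0" using pos[of "t1 - h"] d(1) t1pos unfolding h_def by auto
  ultimately show False by simp
qed

lemma Gamma_logconv:
  assumes "x > 0" "y > 0" shows "Gamma ((x + y)/2) ^ 2 \<le> Gamma x * Gamma (y::real)"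
proof -
  have "(ln \<circ> Gamma) ((1 - 1/2) *\<^sub>R x + (1/2) *\<^sub>R y) \<le> (1 - 1/2) * (ln \<circ> Gamma) x + (1/2) * (ln \<circ> Gamma) y"
    by (rule convex_onD[OF log_convex_Gamma_real]) (use assms in auto)
  hence "2 * ln (Gamma ((x + y)/2)) \<le> ln (Gamma x) + ln (Gamma y)"
    by (simp add: field_simps)
  moreover have "Gamma ((x+y)/2) > 0" "Gamma x > 0" "Gamma y > 0" using assms by auto
  ultimately have "ln (Gamma ((x + y)/2) ^ 2) \<le> ln (Gamma x * Gamma y)"
    by (simp add: ln_mult ln_realpow)
  thus ?thesis using \<open>Gamma ((x+y)/2) > 0\<close> \<open>Gamma x > 0\<close> \<open>Gamma y > 0\<close> by simp
qed

lemma gam_ineq1: assumes s: "s > 0" shows "Gamma (s + 1/2) \<le> sqrt s * Gamma (s::real)"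
proof -
  have "Gamma ((s + (s+1))/2) ^ 2 \<le> Gamma s * Gamma (s + 1)" using Gamma_logconv[of s "s+1"] s by simp
  also have "Gamma (s + 1) = s * Gamma s" using s by (intro Gamma_plus1) (auto elim: nonpos_Ints_cases)
  finally have "Gamma (s + 1/2) ^ 2 \<le> (sqrt s * Gamma s) ^ 2"
    using s by (simp add: power_mult_distrib field_simps power2_eq_square)
  thus ?thesis by (rule power2_le_imp_le) (use s in simp)
qed

lemma gam_ineq2: assumes s: "s > 1/2" shows "sqrt (s - 1/2) * Gamma (s::real) \<le> Gamma (s + 1/2)"
proof -
  have "Gamma (((s - 1/2) + (s + 1/2))/2) ^ 2 \<le> Gamma (s - 1/2) * Gamma (s + 1/2)"
    using Gamma_logconv[of "s - 1/2" "s + 1/2"] s by simp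
  hence "Gamma s ^ 2 \<le> Gamma (s - 1/2) * Gamma (s + 1/2)" by simp
  also have "Gamma (s + 1/2) = (s - 1/2) * Gamma (s - 1/2)"
  proof -
    have "s - 1/2 \<notin> \<int>\<^sub>\<le>\<^sub>0" using s nonpos_Ints_nonpos[of "s - 1/2"] by auto
    thus ?thesis using Gamma_plus1[of "s - 1/2"] by (simp add: algebra_simps)
  qed
  finally have h: "Gamma s ^ 2 \<le> Gamma (s - 1/2) * ((s - 1/2) * Gamma (s - 1/2))" .
  have "(s - 1/2) * Gamma s ^ 2 \<le> (s - 1/2) * (Gamma (s - 1/2) * ((s - 1/2) * Gamma (s - 1/2)))"
    by (rule mult_left_mono[OF h]) (use s in simp)
  also have "\<dots> = ((s - 1/2) * Gamma (s - 1/2)) ^ 2" by (simp add: power2_eq_square)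
  finally have "(s - 1/2) * Gamma s ^ 2 \<le> ((s - 1/2) * Gamma (s - 1/2)) ^ 2" .
  hence "(sqrt (s - 1/2) * Gamma s) ^ 2 \<le> Gamma (s + 1/2) ^ 2"
    using s \<open>Gamma (s + 1/2) = _\<close> by (simp add: power_mult_distrib)
  thus ?thesis by (rule power2_le_imp_le) (use s in simp)
qed

lemma rGamma_reflection_real: "rGamma t * rGamma (1 - t) = sin (pi * t) / pi"
proof -
  have "complex_of_real (rGamma t * rGamma (1 - t)) = rGamma (of_real t) * rGamma (1 - of_real t)"
    by (simp add: rGamma_complex_of_real[symmetric])
  also have "\<dots> = sin (of_real pi * of_real t) / of_real pi" by (rule rGamma_reflection_complex)
  also have "\<dots> = complex_of_real (sin (pi * t) / pi)" by (simp add: sin_of_real[symmetric])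
  finally show ?thesis by (simp only: of_real_eq_iff)
qed

lemma cos_periodic_nat: "cos (x + real k * (2 * pi)) = cos x"
proof (induction k)
  case (Suc k)
  have eq: "x + real (Suc k) * (2 * pi) = (x + real k * (2 * pi)) + 2 * pi" by (simp add: algebra_simps)
  show ?case by (simp only: eq cos_periodic Suc.IH)
qed simp



lemma pA_lower: assumes s: "s > 0"
  shows "pA (2 * s - 1/2) = 2 powr s * sin (pi * s) ^ 2 * Gamma s / pi"
proof -
  have e1: "(2 * s - 1/2)/2 + 1/4 = s" "1/4 + (2 * s - 1/2)/2 = s" "3/4 - (2 * s - 1/2)/2 = 1 - s"
    by (simp_all add: field_simps)
  have r: "rGamma s > 0" using s by (rule rGamma_pos)
  have "rGamma (1 - s) = sin (pi * s) / pi / rGamma s"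
    using rGamma_reflection_real[of s] r by (simp add: field_simps)
  hence "pA (2 * s - 1/2) = pi * 2 powr s * rGamma s * (sin (pi * s) / pi / rGamma s) ^ 2"
    unfolding pA_def e1 by simp
  also have "\<dots> = 2 powr s * sin (pi * s) ^ 2 / (pi * rGamma s)"
    using r by (simp add: power2_eq_square field_simps)
  also have "\<dots> = 2 powr s * sin (pi * s) ^ 2 * Gamma s / pi"
    by (simp add: rGamma_inverse_Gamma field_simps)
  finally show ?thesis .
qed

lemma pA_upper: assumes s: "s > 0"
  shows "pA (2 * s + 1/2) = 2 powr s * sqrt 2 * cos (pi * s) ^ 2 * Gamma (s + 1/2) / pi"
proof -
  have e1: "(2 * s + 1/2)/2 + 1/4 = s + 1/2" "1/4 + (2 * s + 1/2)/2 = s + 1/2" "3/4 - (2 * s + 1/2)/2 = 1 - (s + 1/2)"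
    by (simp_all add: field_simps)
  have r: "rGamma (s + 1/2) > 0" using s by (intro rGamma_pos) simp
  have sc: "sin (pi * (s + 1/2)) = cos (pi * s)"
    by (simp add: distrib_left sin_add)
  have "rGamma (1 - (s + 1/2)) = cos (pi * s) / pi / rGamma (s + 1/2)"
    using rGamma_reflection_real[of "s + 1/2"] r sc by (simp add: field_simps)
  hence "pA (2 * s + 1/2) = pi * 2 powr (s + 1/2) * rGamma (s + 1/2) * (cos (pi * s) / pi / rGamma (s + 1/2)) ^ 2"
    unfolding pA_def e1 by simp
  also have "\<dots> = 2 powr (s + 1/2) * cos (pi * s) ^ 2 / (pi * rGamma (s + 1/2))"
    using r by (simp add: power2_eq_square field_simps)
  also have "2 powr (s + 1/2) = 2 powr s * sqrt 2" by (simp add: powr_add powr_half_sqrt)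
  also have "2 powr s * sqrt 2 * cos (pi * s) ^ 2 / (pi * rGamma (s + 1/2)) = 2 powr s * sqrt 2 * cos (pi * s) ^ 2 * Gamma (s + 1/2) / pi"
    by (simp add: rGamma_inverse_Gamma field_simps)
  finally show ?thesis .
qed

lemma cos_sin_sq: "cos (pi * s) ^ 2 - sin (pi * s) ^ 2 = cos (2 * pi * s)"
  using cos_double[of "pi * s"] by (simp add: mult_ac)

lemma cos_neg_case:
  assumes k: "k \<ge> 1" and s: "real k - 3/4 < s" "s < real k - 1/4"
  shows "cos (pi * s) ^ 2 < sin (pi * s) ^ 2"
proof -
  define t where "t = s - real (k - 1)"
  have t: "1/4 < t" "t < 3/4" using s k unfolding t_def by (simp_all add: of_nat_diff)
  have "cos (2 * pi * s) = cos (2 * pi * t + real (k - 1) * (2 * pi))"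
    unfolding t_def by (simp add: algebra_simps)
  also have "\<dots> = cos (2 * pi * t)" by (rule cos_periodic_nat)
  also have "\<dots> = - cos (2 * pi * t - pi)" by simp
  finally have eq: "cos (2 * pi * s) = - cos (2 * pi * t - pi)" .
  have "cos (2 * pi * t - pi) > 0"
  proof (rule cos_gt_zero_pi)
    have "pi * (1/4) < pi * t" "pi * t < pi * (3/4)"
      by (rule mult_strict_left_mono[OF t(1) pi_gt_zero], rule mult_strict_left_mono[OF t(2) pi_gt_zero])
    moreover have "2 * pi * t = 2 * (pi * t)" by simp
    ultimately show "- (pi / 2) < 2 * pi * t - pi" "2 * pi * t - pi < pi / 2" by linarith+
  qed
  hence "cos (2 * pi * s) < 0" using eq by simp
  thus ?thesis using cos_sin_sq[of s] by simp
qed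

lemma cos_pos_case:
  assumes s: "real k - 1/4 < s" "s < real k + 1/4"
  shows "sin (pi * s) ^ 2 < cos (pi * s) ^ 2"
proof -
  define t where "t = s - real k"
  have t: "-1/4 < t" "t < 1/4" using s unfolding t_def by simp_all
  have "cos (2 * pi * s) = cos (2 * pi * t + real k * (2 * pi))"
    unfolding t_def by (simp add: algebra_simps)
  also have "\<dots> = cos (2 * pi * t)" by (rule cos_periodic_nat)
  also have "cos (2 * pi * t) > 0"
  proof (rule cos_gt_zero_pi)
    have "pi * (-1/4) < pi * t" "pi * t < pi * (1/4)"
      by (rule mult_strict_left_mono[OF t(1) pi_gt_zero], rule mult_strict_left_mono[OF t(2) pi_gt_zero])
    moreover have "2 * pi * t = 2 * (pi * t)" by simp
    ultimately show "- (pi / 2) < 2 * pi * t" "2 * pi * t < pi / 2" by linarith+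
  qed
  finally have "cos (2 * pi * s) > 0" .
  thus ?thesis using cos_sin_sq[of s] by simp
qed



lemma init1:
  assumes k: "k \<ge> 1" and n: "2 * real k - 1 < n" "n < 2 * real k"
  shows "pA n < sqrt (n - 1/2) * pA (n - 1)"
proof -
  define s where "s = n/2 - 1/4"
  have s0: "s > 0" using n k unfolding s_def by simp
  have sr: "real k - 3/4 < s" "s < real k - 1/4" using n unfolding s_def by simp_all
  have n1: "n = 2 * s + 1/2" "n - 1 = 2 * s - 1/2" "n - 1/2 = 2 * s" unfolding s_def by simp_all
  have cs: "cos (pi * s) ^ 2 < sin (pi * s) ^ 2" by (rule cos_neg_case[OF k sr])
  have g: "Gamma (s + 1/2) \<le> sqrt s * Gamma s" by (rule gam_ineq1[OF s0])
  have Gp: "Gamma (s + 1/2) > 0" "sqrt s * Gamma s > 0" using s0 by auto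
  have key: "cos (pi * s) ^ 2 * Gamma (s + 1/2) < sin (pi * s) ^ 2 * (sqrt s * Gamma s)"
  proof -
    have "cos (pi * s) ^ 2 * Gamma (s + 1/2) \<le> cos (pi * s) ^ 2 * (sqrt s * Gamma s)"
      by (rule mult_left_mono[OF g]) simp
    also have "\<dots> < sin (pi * s) ^ 2 * (sqrt s * Gamma s)"
      by (rule mult_strict_right_mono[OF cs Gp(2)])
    finally show ?thesis .
  qed
  define C where "C = 2 powr s * sqrt 2 / pi"
  have C: "C > 0" unfolding C_def by simp
  have "pA n = C * (cos (pi * s) ^ 2 * Gamma (s + 1/2))"
    unfolding n1(1) pA_upper[OF s0] C_def by simp
  also have "\<dots> < C * (sin (pi * s) ^ 2 * (sqrt s * Gamma s))"
    by (rule mult_strict_left_mono[OF key C])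
  also have "\<dots> = sqrt (n - 1/2) * pA (n - 1)"
    unfolding n1(2,3) pA_lower[OF s0] C_def by (simp add: real_sqrt_mult)
  finally show ?thesis .
qed

lemma init2:
  assumes k: "k \<ge> 1" and n: "2 * real k < n" "n < 2 * real k + 1"
  shows "sqrt (n - 3/2) * pA (n - 1) < pA n"
proof -
  define s where "s = n/2 - 1/4"
  have s0: "s > 1/2" using n k unfolding s_def by simp
  hence s00: "s > 0" by simp
  have sr: "real k - 1/4 < s" "s < real k + 1/4" using n unfolding s_def by simp_all
  have n1: "n = 2 * s + 1/2" "n - 1 = 2 * s - 1/2" "n - 3/2 = 2 * (s - 1/2)" unfolding s_def by simp_all
  have cs: "sin (pi * s) ^ 2 < cos (pi * s) ^ 2" by (rule cos_pos_case[OF sr])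
  have g: "sqrt (s - 1/2) * Gamma s \<le> Gamma (s + 1/2)" by (rule gam_ineq2[OF s0])
  have Gp: "sqrt (s - 1/2) * Gamma s > 0" using s0 by auto
  have key: "sin (pi * s) ^ 2 * (sqrt (s - 1/2) * Gamma s) < cos (pi * s) ^ 2 * Gamma (s + 1/2)"
  proof -
    have "sin (pi * s) ^ 2 * (sqrt (s - 1/2) * Gamma s) < cos (pi * s) ^ 2 * (sqrt (s - 1/2) * Gamma s)"
      by (rule mult_strict_right_mono[OF cs Gp])
    also have "\<dots> \<le> cos (pi * s) ^ 2 * Gamma (s + 1/2)"
      by (rule mult_left_mono[OF g]) simp
    finally show ?thesis .
  qed
  define C where "C = 2 powr s * sqrt 2 / pi"
  have C: "C > 0" unfolding C_def by simp
  have "sqrt (n - 3/2) * pA (n - 1) = C * (sin (pi * s) ^ 2 * (sqrt (s - 1/2) * Gamma s))"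
  proof -
    have sq: "sqrt (2 * (s - 1/2)) = sqrt 2 * sqrt (s - 1/2)" by (rule real_sqrt_mult)
    show ?thesis unfolding n1(2,3) pA_lower[OF s00] C_def sq by simp
  qed
  also have "\<dots> < C * (cos (pi * s) ^ 2 * Gamma (s + 1/2))"
    by (rule mult_strict_left_mono[OF key C])
  also have "\<dots> = pA n"
    unfolding n1(1) pA_upper[OF s00] C_def by simp
  finally show ?thesis .
qed



lemma lam_deriv:
  assumes c: "c > 0"
  shows "((\<lambda>t. (t + sqrt (c + t\<^sup>2)) / 2) has_real_derivative ((1 + t / sqrt (c + t\<^sup>2)) / 2)) (at t)"
proof -
  have p: "c + t\<^sup>2 > 0" using c by (simp add: add_pos_nonneg)
  have d0: "((\<lambda>t. t\<^sup>2) has_real_derivative 2 * t) (at t)"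
    using DERIV_pow[of 2 t] by simp
  have d1: "((\<lambda>t. c + t\<^sup>2) has_real_derivative 2 * t) (at t)"
    using DERIV_add[OF DERIV_const[of c] d0] by simp
  have d2: "((\<lambda>t. sqrt (c + t\<^sup>2)) has_real_derivative (inverse (sqrt (c + t\<^sup>2)) / 2 * (2 * t))) (at t)"
    by (rule DERIV_chain2[OF DERIV_real_sqrt[OF p] d1])
  have d3: "((\<lambda>t. t + sqrt (c + t\<^sup>2)) has_real_derivative (1 + inverse (sqrt (c + t\<^sup>2)) / 2 * (2 * t))) (at t)"
    by (rule DERIV_add[OF DERIV_ident d2])
  have d4: "((\<lambda>t. (t + sqrt (c + t\<^sup>2)) / 2) has_real_derivative ((1 + inverse (sqrt (c + t\<^sup>2)) / 2 * (2 * t)) / 2)) (at t)"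
    by (rule DERIV_cdivide[OF d3])
  have e: "(1 + inverse (sqrt (c + t\<^sup>2)) / 2 * (2 * t)) / 2 = (1 + t / sqrt (c + t\<^sup>2)) / 2"
  proof -
    have "inverse S / 2 * (2 * t) = t / S" for S :: real by (simp add: inverse_eq_divide)
    thus ?thesis by simp
  qed
  show ?thesis using d4 unfolding e .
qed


lemma lam_sq: assumes c: "c \<ge> 0"
  shows "((t + sqrt (c + t\<^sup>2)) / 2) ^ 2 - t * ((t + sqrt (c + t\<^sup>2)) / 2) = c / 4"
proof -
  have aux: "S ^ 2 = c + t ^ 2 \<Longrightarrow> ((t + S) / 2) ^ 2 - t * ((t + S) / 2) = c / 4" for S :: real
    by (simp add: power2_eq_square algebra_simps add_divide_distrib)
  have "sqrt (c + t\<^sup>2) ^ 2 = c + t\<^sup>2" using c by simp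
  thus ?thesis by (rule aux)
qed

lemma part1:
  assumes k: "k \<ge> 1" and n: "2 * real k - 1 < n" "n < 2 * real k" and x: "x > 0"
  shows "pcfV n x / pcfV (n - 1) x < (x + sqrt (4 * n - 2 + x\<^sup>2)) / 2"
proof -
  define c where "c = 4 * n - 2"
  have c: "c > 0" using n k unfolding c_def by simp
  define lam where "lam t = (t + sqrt (c + t\<^sup>2)) / 2" for t
  define lam' where "lam' t = (1 + t / sqrt (c + t\<^sup>2)) / 2" for t
  define g where "g t = lam t * pcfV (n - 1) t - pcfV n t" for t
  have dlam: "(lam has_real_derivative lam' t) (at t)" for t
    unfolding lam_def[abs_def] lam'_def by (rule lam_deriv[OF c])
  have dw: "(pcfV (n - 1) has_real_derivative (pcfV n t - t/2 * pcfV (n - 1) t)) (at t)" for t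
    using V_D7[of "n - 1" t] by simp
  have dv: "(pcfV n has_real_derivative (t/2 * pcfV n t + (n - 1/2) * pcfV (n - 1) t)) (at t)" for t
    by (rule V_D6)
  have dg: "(g has_real_derivative (lam' t * pcfV (n - 1) t + lam t * (pcfV n t - t/2 * pcfV (n - 1) t)
              - (t/2 * pcfV n t + (n - 1/2) * pcfV (n - 1) t))) (at t)" for t
    unfolding g_def[abs_def] by (rule DERIV_cong[OF DERIV_diff[OF DERIV_mult'[OF dlam dw] dv]]) (simp add: algebra_simps)
  have cont: "isCont g t" for t using dg[of t] by (rule DERIV_isCont)
  have g0: "g 0 > 0"
  proof -
    have "lam 0 = sqrt (n - 1/2)"
    proof -
      have "sqrt c = sqrt 4 * sqrt (n - 1/2)" unfolding c_def by (subst real_sqrt_mult[symmetric]) simp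
      thus ?thesis unfolding lam_def by simp
    qed
    thus ?thesis unfolding g_def pcfV_0 using init1[OF k n] by simp
  qed
  have der: "\<exists>D. (g has_real_derivative D) (at t) \<and> D > 0" if t: "t > 0" "g t = 0" for t
  proof -
    have w: "pcfV (n - 1) t > 0" using n k t by (intro pcfV_pos) simp_all
    have v: "pcfV n t = lam t * pcfV (n - 1) t" using t unfolding g_def by simp
    have sq: "lam t ^ 2 - t * lam t = c / 4" unfolding lam_def using lam_sq[of c t] c by simp
    have lp: "lam' t > 0"
    proof -
      have S: "sqrt (c + t\<^sup>2) > 0" using c by (simp add: add_pos_nonneg)
      have "t / sqrt (c + t\<^sup>2) > 0" by (rule divide_pos_pos[OF t(1) S])
      thus ?thesis unfolding lam'_def by simp
    qed
    have "lam' t * pcfV (n - 1) t + lam t * (pcfV n t - t/2 * pcfV (n - 1) t)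
              - (t/2 * pcfV n t + (n - 1/2) * pcfV (n - 1) t)
          = pcfV (n - 1) t * (lam' t + (lam t ^ 2 - t * lam t) - (n - 1/2))"
      unfolding v by (simp add: algebra_simps power2_eq_square)
    also have "\<dots> = pcfV (n - 1) t * lam' t" unfolding sq c_def by (simp add: field_simps)
    finally have eq: "lam' t * pcfV (n - 1) t + lam t * (pcfV n t - t/2 * pcfV (n - 1) t)
              - (t/2 * pcfV n t + (n - 1/2) * pcfV (n - 1) t) = pcfV (n - 1) t * lam' t" .
    have "lam' t * pcfV (n - 1) t + lam t * (pcfV n t - t/2 * pcfV (n - 1) t)
              - (t/2 * pcfV n t + (n - 1/2) * pcfV (n - 1) t) > 0"
      unfolding eq using w lp by simp
    thus ?thesis using dg[of t] by blast
  qed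
  have "g x > 0" by (rule first_zero[OF cont g0 der x])
  moreover have "pcfV (n - 1) x > 0" using n k x by (intro pcfV_pos) simp_all
  ultimately show ?thesis unfolding g_def lam_def c_def by (simp add: divide_simps)
qed

lemma part2:
  assumes k: "k \<ge> 1" and n: "2 * real k < n" "n < 2 * real k + 1" and x: "x > 0"
  shows "(x + sqrt (4 * n - 6 + x\<^sup>2)) / 2 < pcfV n x / pcfV (n - 1) x"
proof -
  define c where "c = 4 * n - 6"
  have c: "c > 0" using n k unfolding c_def by simp
  define lam where "lam t = (t + sqrt (c + t\<^sup>2)) / 2" for t
  define lam' where "lam' t = (1 + t / sqrt (c + t\<^sup>2)) / 2" for t
  define g where "g t = pcfV n t - lam t * pcfV (n - 1) t" for t
  have dlam: "(lam has_real_derivative lam' t) (at t)" for t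
    unfolding lam_def[abs_def] lam'_def by (rule lam_deriv[OF c])
  have dw: "(pcfV (n - 1) has_real_derivative (pcfV n t - t/2 * pcfV (n - 1) t)) (at t)" for t
    using V_D7[of "n - 1" t] by simp
  have dv: "(pcfV n has_real_derivative (t/2 * pcfV n t + (n - 1/2) * pcfV (n - 1) t)) (at t)" for t
    by (rule V_D6)
  have dg: "(g has_real_derivative ((t/2 * pcfV n t + (n - 1/2) * pcfV (n - 1) t)
              - (lam' t * pcfV (n - 1) t + lam t * (pcfV n t - t/2 * pcfV (n - 1) t)))) (at t)" for t
    unfolding g_def[abs_def] by (rule DERIV_cong[OF DERIV_diff[OF dv DERIV_mult'[OF dlam dw]]]) (simp add: algebra_simps)
  have cont: "isCont g t" for t using dg[of t] by (rule DERIV_isCont)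
  have g0: "g 0 > 0"
  proof -
    have "lam 0 = sqrt (n - 3/2)"
    proof -
      have "sqrt c = sqrt 4 * sqrt (n - 3/2)" unfolding c_def by (subst real_sqrt_mult[symmetric]) simp
      thus ?thesis unfolding lam_def by simp
    qed
    thus ?thesis unfolding g_def pcfV_0 using init2[OF k n] by simp
  qed
  have der: "\<exists>D. (g has_real_derivative D) (at t) \<and> D > 0" if t: "t > 0" "g t = 0" for t
  proof -
    have w: "pcfV (n - 1) t > 0" using n k t by (intro pcfV_pos) simp_all
    have v: "pcfV n t = lam t * pcfV (n - 1) t" using t unfolding g_def by simp
    have sq: "lam t ^ 2 - t * lam t = c / 4" unfolding lam_def using lam_sq[of c t] c by simp
    have lp: "lam' t < 1"
    proof -
      have S: "sqrt (c + t\<^sup>2) > 0" using c by (simp add: add_pos_nonneg)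
      have "sqrt (t\<^sup>2) < sqrt (c + t\<^sup>2)" using c by (subst real_sqrt_less_iff) simp
      hence "t < sqrt (c + t\<^sup>2)" using t by simp
      hence "t / sqrt (c + t\<^sup>2) < 1" using S by simp
      thus ?thesis unfolding lam'_def by simp
    qed
    have "(t/2 * pcfV n t + (n - 1/2) * pcfV (n - 1) t)
              - (lam' t * pcfV (n - 1) t + lam t * (pcfV n t - t/2 * pcfV (n - 1) t))
          = pcfV (n - 1) t * ((n - 1/2) - (lam t ^ 2 - t * lam t) - lam' t)"
      unfolding v by (simp add: algebra_simps power2_eq_square)
    also have "\<dots> = pcfV (n - 1) t * (1 - lam' t)" unfolding sq c_def by (simp add: field_simps)
    finally have eq: "(t/2 * pcfV n t + (n - 1/2) * pcfV (n - 1) t)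
              - (lam' t * pcfV (n - 1) t + lam t * (pcfV n t - t/2 * pcfV (n - 1) t)) = pcfV (n - 1) t * (1 - lam' t)" .
    have "(t/2 * pcfV n t + (n - 1/2) * pcfV (n - 1) t)
              - (lam' t * pcfV (n - 1) t + lam t * (pcfV n t - t/2 * pcfV (n - 1) t)) > 0"
      unfolding eq using w lp by simp
    thus ?thesis using dg[of t] by blast
  qed
  have "g x > 0" by (rule first_zero[OF cont g0 der x])
  moreover have "pcfV (n - 1) x > 0" using n k x by (intro pcfV_pos) simp_all
  ultimately show ?thesis unfolding g_def lam_def c_def by (simp add: divide_simps)
qed



fun hr :: "nat \<Rightarrow> real \<Rightarrow> real" where
  "hr 0 x = 1"
| "hr (Suc 0) x = 2 * x"
| "hr (Suc (Suc n)) x = 2 * x * hr (Suc n) x + 2 * real (Suc n) * hr n x"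

lemma herm_aux:
  fixes i X I a m b :: complex
  assumes ii: "i * i = -1"
  shows "2 * (i * X) * (i * I * a) - 2 * m * (I * b) = i * (i * I) * (2 * X * a + 2 * m * b)"
proof -
  have "2 * (i * X) * (i * I * a) - 2 * m * (I * b) - i * (i * I) * (2 * X * a + 2 * m * b)
      = - (2 * m * I * b) * (i * i + 1)"
    by (simp add: algebra_simps)
  also have "\<dots> = 0" using ii by simp
  finally show ?thesis by simp
qed

lemma hermite_hr: "hermite n (\<i> * complex_of_real x) = \<i> ^ n * complex_of_real (hr n x)"
proof (induction n x rule: hr.induct)
  case (3 n x)
  have ii: "\<i> * \<i> = (-1::complex)" by simp
  have "hermite (Suc (Suc n)) (\<i> * of_real x) = 2 * (\<i> * of_real x) * (\<i> ^ Suc n * of_real (hr (Suc n) x))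
          - 2 * of_nat (Suc n) * (\<i> ^ n * of_real (hr n x))"
    using 3 by (simp only: hermite.simps)
  also have "\<dots> = \<i> ^ Suc (Suc n) * of_real (hr (Suc (Suc n)) x)"
    unfolding hr.simps of_real_add of_real_mult of_real_of_nat_eq power_Suc of_real_numeral
    by (rule herm_aux[OF ii])
  finally show ?case .
qed simp_all

lemma hr_rec: "hr (Suc n) x = 2 * x * hr n x + 2 * real n * hr (n - 1) x"
  by (cases n) simp_all

lemma hr_deriv: "(hr n has_real_derivative (2 * real n * hr (n - 1) x)) (at x)"
proof (induction n x rule: hr.induct)
  case (1 x) show ?case by simp
next
  case (2 x)
  have "hr (Suc 0) = (\<lambda>x. 2 * x)" by (rule ext) simp
  thus ?case by (simp only:) (rule DERIV_cong[OF DERIV_cmult[OF DERIV_ident]], simp)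
next
  case (3 n x)
  have d: "((\<lambda>x. 2 * x * hr (Suc n) x + 2 * real (Suc n) * hr n x) has_real_derivative
      (2 * x * (2 * real (Suc n) * hr (Suc n - 1) x) + 2 * 1 * hr (Suc n) x + 2 * real (Suc n) * (2 * real n * hr (n - 1) x))) (at x)"
    by (rule DERIV_add[OF DERIV_mult'[OF DERIV_cmult[OF DERIV_ident] 3(1)] DERIV_cmult[OF 3(2)]])
  have "2 * x * (2 * real (Suc n) * hr (Suc n - 1) x) + 2 * 1 * hr (Suc n) x + 2 * real (Suc n) * (2 * real n * hr (n - 1) x)
      = 2 * real (Suc (Suc n)) * hr (Suc (Suc n) - 1) x"
    using hr_rec[of n x] by (simp add: algebra_simps)
  with d show ?case by (simp only: hr.simps)
qed

lemma hr_pos: "x > 0 \<Longrightarrow> hr n x > 0"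
proof (induction n x rule: hr.induct)
  case (3 n x)
  have "0 < 2 * x * hr (Suc n) x" using 3 by simp
  moreover have "0 < 2 * real (Suc n) * hr n x" using 3 by simp
  ultimately show ?case by simp
qed simp_all

lemma hr_zero: "hr (2 * k) 0 > 0 \<and> hr (2 * k + 1) 0 = 0"
proof (induction k)
  case (Suc k)
  have e1: "2 * Suc k = Suc (Suc (2 * k))" and e2: "2 * Suc k + 1 = Suc (Suc (2 * k + 1))" by simp_all
  have "hr (Suc (Suc (2 * k))) 0 = 2 * real (Suc (2 * k)) * hr (2 * k) 0" by simp
  moreover have "hr (Suc (Suc (2 * k + 1))) 0 = 2 * real (Suc (2 * k + 1)) * hr (2 * k + 1) 0" by simp
  ultimately show ?case unfolding e1 e2 using Suc by simp
qed simp

lemma hr_neg: "hr n (- x) = (-1) ^ n * hr n x"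
proof (induction n x rule: hr.induct)
  case (3 n x)
  have p1: "(-1::real) ^ Suc n = - ((-1) ^ n)" and p2: "(-1::real) ^ Suc (Suc n) = (-1) ^ n" by simp_all
  show ?case unfolding hr.simps 3 p1 p2 by (simp add: algebra_simps)
qed simp_all

lemma f_deriv:
  assumes c: "c > 0"
  shows "((\<lambda>t. t + sqrt (c + t\<^sup>2)) has_real_derivative (1 + t / sqrt (c + t\<^sup>2))) (at t)"
proof -
  have p: "c + t\<^sup>2 > 0" using c by (simp add: add_pos_nonneg)
  have d0: "((\<lambda>t. t\<^sup>2) has_real_derivative 2 * t) (at t)"
    using DERIV_pow[of 2 t] by simp
  have d1: "((\<lambda>t. c + t\<^sup>2) has_real_derivative 2 * t) (at t)"
    using DERIV_add[OF DERIV_const[of c] d0] by simp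
  have d2: "((\<lambda>t. sqrt (c + t\<^sup>2)) has_real_derivative (inverse (sqrt (c + t\<^sup>2)) / 2 * (2 * t))) (at t)"
    by (rule DERIV_chain2[OF DERIV_real_sqrt[OF p] d1])
  have d3: "((\<lambda>t. t + sqrt (c + t\<^sup>2)) has_real_derivative (1 + inverse (sqrt (c + t\<^sup>2)) / 2 * (2 * t))) (at t)"
    by (rule DERIV_add[OF DERIV_ident d2])
  have e: "(1 + inverse (sqrt (c + t\<^sup>2)) / 2 * (2 * t)) = (1 + t / sqrt (c + t\<^sup>2))"
  proof -
    have "inverse S / 2 * (2 * t) = t / S" for S :: real by (simp add: inverse_eq_divide)
    thus ?thesis by simp
  qed
  show ?thesis using d3 unfolding e .
qed

lemma f_sq: assumes c: "c \<ge> 0"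
  shows "(t + sqrt (c + t\<^sup>2)) ^ 2 - 2 * t * (t + sqrt (c + t\<^sup>2)) = c"
proof -
  have aux: "S ^ 2 = c + t ^ 2 \<Longrightarrow> (t + S) ^ 2 - 2 * t * (t + S) = c" for S :: real
    by (simp add: power2_eq_square algebra_simps)
  have "sqrt (c + t\<^sup>2) ^ 2 = c + t\<^sup>2" using c by simp
  thus ?thesis by (rule aux)
qed

lemma herm_even:
  assumes h0: "hr n 0 > 0" and h1: "hr (Suc n) 0 = 0" and x: "x > 0"
  shows "hr (Suc n) x < (x + sqrt (2 * (real n + 1) + x\<^sup>2)) * hr n x"
proof -
  define c where "c = 2 * (real n + 1)"
  have c: "c > 0" unfolding c_def by simp
  define f where "f t = t + sqrt (c + t\<^sup>2)" for t
  define f' where "f' t = 1 + t / sqrt (c + t\<^sup>2)" for t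
  define g where "g t = f t * hr n t - hr (Suc n) t" for t
  have df: "(f has_real_derivative f' t) (at t)" for t
    unfolding f_def[abs_def] f'_def by (rule f_deriv[OF c])
  have dg: "(g has_real_derivative (f' t * hr n t + f t * (2 * real n * hr (n - 1) t) - 2 * real (Suc n) * hr n t)) (at t)" for t
    unfolding g_def[abs_def]
    by (rule DERIV_cong[OF DERIV_diff[OF DERIV_mult'[OF df hr_deriv] hr_deriv]]) (simp add: algebra_simps)
  have cont: "isCont g t" for t using dg[of t] by (rule DERIV_isCont)
  have g0: "g 0 > 0"
  proof -
    have "f 0 > 0" unfolding f_def using c by simp
    thus ?thesis unfolding g_def h1 using h0 by simp
  qed
  have der: "\<exists>D. (g has_real_derivative D) (at t) \<and> D > 0" if t: "t > 0" "g t = 0" for t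
  proof -
    have w: "hr n t > 0" using t(1) by (rule hr_pos)
    have v: "hr (Suc n) t = f t * hr n t" using t unfolding g_def by simp
    have r: "2 * real n * hr (n - 1) t = (f t - 2 * t) * hr n t" using hr_rec[of n t] v by (simp add: algebra_simps)
    have sq: "f t ^ 2 - 2 * t * f t = c" unfolding f_def by (rule f_sq) (use c in simp)
    have lp: "f' t > 0"
    proof -
      have S: "sqrt (c + t\<^sup>2) > 0" using c by (simp add: add_pos_nonneg)
      have "t / sqrt (c + t\<^sup>2) > 0" by (rule divide_pos_pos[OF t(1) S])
      thus ?thesis unfolding f'_def by simp
    qed
    have "f' t * hr n t + f t * (2 * real n * hr (n - 1) t) - 2 * real (Suc n) * hr n t
        = hr n t * (f' t + (f t ^ 2 - 2 * t * f t) - 2 * real (Suc n))"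
      unfolding r by (simp add: algebra_simps power2_eq_square)
    also have "\<dots> = hr n t * f' t" unfolding sq c_def by simp
    finally have eq: "f' t * hr n t + f t * (2 * real n * hr (n - 1) t) - 2 * real (Suc n) * hr n t = hr n t * f' t" .
    have "f' t * hr n t + f t * (2 * real n * hr (n - 1) t) - 2 * real (Suc n) * hr n t > 0"
      unfolding eq using w lp by simp
    thus ?thesis using dg[of t] by blast
  qed
  have "g x > 0" by (rule first_zero[OF cont g0 der x])
  thus ?thesis unfolding g_def f_def c_def by simp
qed

lemma herm_odd:
  assumes n: "n \<ge> 1" and h0: "hr n 0 = 0" and h1: "hr (Suc n) 0 > 0" and x: "x > 0"
  shows "(x + sqrt (2 * real n + x\<^sup>2)) * hr n x < hr (Suc n) x"
proof -
  define c where "c = 2 * real n"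
  have c: "c > 0" unfolding c_def using n by simp
  define f where "f t = t + sqrt (c + t\<^sup>2)" for t
  define f' where "f' t = 1 + t / sqrt (c + t\<^sup>2)" for t
  define g where "g t = hr (Suc n) t - f t * hr n t" for t
  have df: "(f has_real_derivative f' t) (at t)" for t
    unfolding f_def[abs_def] f'_def by (rule f_deriv[OF c])
  have dg: "(g has_real_derivative (2 * real (Suc n) * hr n t - (f' t * hr n t + f t * (2 * real n * hr (n - 1) t)))) (at t)" for t
    unfolding g_def[abs_def]
    by (rule DERIV_cong[OF DERIV_diff[OF hr_deriv DERIV_mult'[OF df hr_deriv]]]) (simp add: algebra_simps)
  have cont: "isCont g t" for t using dg[of t] by (rule DERIV_isCont)
  have g0: "g 0 > 0" unfolding g_def h0 using h1 by simp
  have der: "\<exists>D. (g has_real_derivative D) (at t) \<and> D > 0" if t: "t > 0" "g t = 0" for t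
  proof -
    have w: "hr n t > 0" using t(1) by (rule hr_pos)
    have v: "hr (Suc n) t = f t * hr n t" using t unfolding g_def by simp
    have r: "2 * real n * hr (n - 1) t = (f t - 2 * t) * hr n t" using hr_rec[of n t] v by (simp add: algebra_simps)
    have sq: "f t ^ 2 - 2 * t * f t = c" unfolding f_def by (rule f_sq) (use c in simp)
    have lp: "f' t < 2"
    proof -
      have S: "sqrt (c + t\<^sup>2) > 0" using c by (simp add: add_pos_nonneg)
      have "sqrt (t\<^sup>2) < sqrt (c + t\<^sup>2)" using c by (subst real_sqrt_less_iff) simp
      hence "t < sqrt (c + t\<^sup>2)" using t by simp
      hence "t / sqrt (c + t\<^sup>2) < 1" using S by simp
      thus ?thesis unfolding f'_def by simp
    qed
    have "2 * real (Suc n) * hr n t - (f' t * hr n t + f t * (2 * real n * hr (n - 1) t))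
        = hr n t * (2 * real (Suc n) - f' t - (f t ^ 2 - 2 * t * f t))"
      unfolding r by (simp add: algebra_simps power2_eq_square)
    also have "\<dots> = hr n t * (2 - f' t)" unfolding sq c_def by simp
    finally have eq: "2 * real (Suc n) * hr n t - (f' t * hr n t + f t * (2 * real n * hr (n - 1) t)) = hr n t * (2 - f' t)" .
    have "2 * real (Suc n) * hr n t - (f' t * hr n t + f t * (2 * real n * hr (n - 1) t)) > 0"
      unfolding eq using w lp by simp
    thus ?thesis using dg[of t] by blast
  qed
  have "g x > 0" by (rule first_zero[OF cont g0 der x])
  thus ?thesis unfolding g_def f_def c_def by simp
qed



lemma i_pow_nz: "(\<i>::complex) ^ m \<noteq> 0" by simp

lemma part3:
  assumes x: "x > 0"
  shows "(let q = - \<i> * hermite (2 * k + 1) (\<i> * of_real x) / hermite (2 * k) (\<i> * of_real x)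
        in q \<in> \<real> \<and> Re q < x + sqrt (4 * real k + 2 + x\<^sup>2))"
proof -
  define P where "P = (\<i>::complex) ^ (2 * k)"
  have P: "P \<noteq> 0" unfolding P_def by simp
  have "- \<i> * hermite (2 * k + 1) (\<i> * of_real x) / hermite (2 * k) (\<i> * of_real x)
      = - \<i> * (\<i> * P * of_real (hr (2 * k + 1) x)) / (P * of_real (hr (2 * k) x))"
    unfolding hermite_hr P_def by simp
  also have "\<dots> = of_real (hr (2 * k + 1) x / hr (2 * k) x)"
    using P by (simp add: field_simps)
  finally have q: "- \<i> * hermite (2 * k + 1) (\<i> * of_real x) / hermite (2 * k) (\<i> * of_real x)
      = of_real (hr (2 * k + 1) x / hr (2 * k) x)" .
  have h0: "hr (2 * k) 0 > 0" "hr (Suc (2 * k)) 0 = 0" using hr_zero[of k] by simp_all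
  have "hr (Suc (2 * k)) x < (x + sqrt (2 * (real (2 * k) + 1) + x\<^sup>2)) * hr (2 * k) x"
    by (rule herm_even[OF h0 x])
  moreover have "2 * (real (2 * k) + 1) = 4 * real k + 2" by simp
  moreover have "hr (2 * k) x > 0" using x by (rule hr_pos)
  ultimately have "hr (2 * k + 1) x / hr (2 * k) x < x + sqrt (4 * real k + 2 + x\<^sup>2)"
    by (simp add: divide_less_eq)
  thus ?thesis unfolding Let_def q by simp
qed

lemma part4:
  assumes k: "k \<ge> 1" and x: "x > 0"
  shows "(let q = \<i> * hermite (2 * k - 1) (\<i> * of_real x) / hermite (2 * k) (\<i> * of_real x)
        in q \<in> \<real> \<and> Re q < inverse (x + sqrt (4 * real k - 2 + x\<^sup>2)))"
proof -
  define m where "m = 2 * k - 1"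
  have m: "2 * k = Suc m" "m \<ge> 1" unfolding m_def using k by simp_all
  have "\<i> * hermite (2 * k - 1) (\<i> * of_real x) / hermite (2 * k) (\<i> * of_real x)
      = (\<i> * \<i> ^ m) * of_real (hr m x) / (\<i> ^ Suc m * of_real (hr (Suc m) x))"
    unfolding hermite_hr m(1) m_def[symmetric] by (simp add: mult.assoc)
  also have "\<dots> = of_real (hr m x / hr (Suc m) x)"
    by (simp add: field_simps)
  finally have q: "\<i> * hermite (2 * k - 1) (\<i> * of_real x) / hermite (2 * k) (\<i> * of_real x)
      = of_real (hr m x / hr (Suc m) x)" .
  have h0: "hr m 0 = 0" "hr (Suc m) 0 > 0"
  proof -
    have "m = 2 * (k - 1) + 1" unfolding m_def using k by simp
    thus "hr m 0 = 0" using hr_zero[of "k - 1"] by simp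
    show "hr (Suc m) 0 > 0" using hr_zero[of k] m(1) by simp
  qed
  have lt: "(x + sqrt (2 * real m + x\<^sup>2)) * hr m x < hr (Suc m) x"
    by (rule herm_odd[OF m(2) h0 x])
  have rm: "2 * real m = 4 * real k - 2" unfolding m_def using k by (simp add: of_nat_diff)
  define f where "f = x + sqrt (4 * real k - 2 + x\<^sup>2)"
  have "real k \<ge> 1" using k by simp
  moreover have "x\<^sup>2 \<ge> 0" by simp
  ultimately have a: "4 * real k - 2 + x\<^sup>2 > 0" by linarith
  have fpos: "f > 0" unfolding f_def using x real_sqrt_gt_zero[OF a] by linarith
  have hp: "hr (Suc m) x > 0" using x by (rule hr_pos)
  have "hr m x / hr (Suc m) x < inverse f"
    using lt hp fpos unfolding rm f_def[symmetric] by (simp add: divide_less_eq field_simps)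
  thus ?thesis unfolding Let_def q f_def by simp
qed

lemma part5_pos:
  assumes k: "k \<ge> 1" and y: "y > 0"
  shows "sqrt ((real k - 1/2) / (real k + 1/2)) < hr (2 * k) y ^ 2 / (hr (2 * k - 1) y * hr (2 * k + 1) y)"
proof -
  define m where "m = 2 * k - 1"
  have m: "2 * k = Suc m" "m \<ge> 1" unfolding m_def using k by simp_all
  define P where "P = hr m y"
  define B where "B = hr (Suc m) y"
  define R where "R = hr (Suc (Suc m)) y"
  have pos: "P > 0" "B > 0" "R > 0" unfolding P_def B_def R_def by (rule hr_pos[OF y])+
  have h0: "hr m 0 = 0" "hr (Suc m) 0 > 0" "hr (Suc (Suc m)) 0 = 0"
  proof -
    have "m = 2 * (k - 1) + 1" unfolding m_def using k by simp
    thus "hr m 0 = 0" using hr_zero[of "k - 1"] by simp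
    show "hr (Suc m) 0 > 0" using hr_zero[of k] m(1) by simp
    show "hr (Suc (Suc m)) 0 = 0" using hr_zero[of k] m(1) by simp
  qed
  have rk: "real k \<ge> 1" using k by simp
  have rm: "2 * real m = 4 * real k - 2" unfolding m_def using k by (simp add: of_nat_diff)
  have rm2: "2 * (real (Suc m) + 1) = 4 * real k + 2" using m(1) rm by simp
  define f1 where "f1 = y + sqrt (4 * real k - 2 + y\<^sup>2)"
  define f2 where "f2 = y + sqrt (4 * real k + 2 + y\<^sup>2)"
  have a1: "4 * real k - 2 + y\<^sup>2 > 0" "4 * real k + 2 + y\<^sup>2 > 0"
    using rk by (simp_all add: add_pos_nonneg)
  have f1p: "f1 > 0" unfolding f1_def using y real_sqrt_gt_zero[OF a1(1)] by linarith
  have f2p: "f2 > 0" unfolding f2_def using y real_sqrt_gt_zero[OF a1(2)] by linarith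
  have l1: "f1 * P < B" using herm_odd[OF m(2) h0(1,2) y] unfolding rm f1_def P_def B_def .
  have l2: "R < f2 * B" using herm_even[OF h0(2,3) y] unfolding rm2 f2_def R_def B_def .
  have "f1 * (P * R) < f1 * (P * (f2 * B))"
    using l2 pos f1p by (intro mult_strict_left_mono) simp_all
  also have "\<dots> = (f1 * P) * (f2 * B)" by (simp add: mult_ac)
  also have "\<dots> < B * (f2 * B)"
    using l1 pos f2p by (intro mult_strict_right_mono) simp_all
  finally have main: "f1 * (P * R) < f2 * B ^ 2" by (simp add: power2_eq_square mult_ac)
  have fr: "f1 / f2 < B ^ 2 / (P * R)"
    using main pos f2p by (simp add: divide_less_eq less_divide_eq field_simps)
  define r where "r = sqrt ((real k - 1/2) / (real k + 1/2))"
  have q0: "(real k - 1/2) / (real k + 1/2) \<ge> 0" using rk by (intro divide_nonneg_pos) simp_all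
  have r0: "r \<ge> 0" unfolding r_def using q0 by simp
  have r1: "r \<le> 1" unfolding r_def using rk by simp
  have r2: "r ^ 2 = (4 * real k - 2) / (4 * real k + 2)"
    unfolding r_def using q0 rk by (simp add: field_simps)
  have "r * sqrt (4 * real k + 2 + y\<^sup>2) = sqrt (r ^ 2 * (4 * real k + 2 + y\<^sup>2))"
    using r0 by (simp add: real_sqrt_mult)
  also have "r ^ 2 * (4 * real k + 2 + y\<^sup>2) = 4 * real k - 2 + r ^ 2 * y\<^sup>2"
    unfolding r2 using rk by (simp add: field_simps)
  also have "sqrt (4 * real k - 2 + r ^ 2 * y\<^sup>2) \<le> sqrt (4 * real k - 2 + y\<^sup>2)"
  proof -
    have "r ^ 2 \<le> 1" using r0 r1 by (simp add: power_le_one)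
    hence "r ^ 2 * y\<^sup>2 \<le> 1 * y\<^sup>2" by (intro mult_right_mono) simp_all
    thus ?thesis by simp
  qed
  finally have s1: "r * sqrt (4 * real k + 2 + y\<^sup>2) \<le> sqrt (4 * real k - 2 + y\<^sup>2)" .
  have s2: "r * y \<le> y" using r1 y by (simp add: mult_left_le_one_le)
  have "r * f2 \<le> f1" unfolding f1_def f2_def using s1 s2 by (simp add: distrib_left)
  hence "r \<le> f1 / f2" using f2p by (simp add: le_divide_eq)
  with fr have "r < B ^ 2 / (P * R)" by simp
  moreover have "hr (2 * k - 1) y = P" "hr (2 * k) y = B" "hr (2 * k + 1) y = R"
    unfolding P_def B_def R_def m_def using k by (simp_all add: Suc_diff_Suc numeral_2_eq_2)
  ultimately show ?thesis unfolding r_def by simp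
qed

lemma part5:
  assumes k: "k \<ge> 1" and x: "x \<noteq> 0"
  shows "(let q = (hermite (2 * k) (\<i> * of_real x))\<^sup>2 /
                (hermite (2 * k - 1) (\<i> * of_real x) * hermite (2 * k + 1) (\<i> * of_real x))
        in q \<in> \<real> \<and> Re q > sqrt ((real k - 1/2) / (real k + 1/2)))"
proof -
  define m where "m = 2 * k - 1"
  have m: "2 * k = Suc m" "2 * k + 1 = Suc (Suc m)" unfolding m_def using k by simp_all
  define F where "F y = hr (2 * k) y ^ 2 / (hr (2 * k - 1) y * hr (2 * k + 1) y)" for y
  have q: "(hermite (2 * k) (\<i> * of_real x))\<^sup>2 /
                (hermite (2 * k - 1) (\<i> * of_real x) * hermite (2 * k + 1) (\<i> * of_real x))
        = of_real (F x)"
  proof -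
    have "(hermite (2 * k) (\<i> * of_real x))\<^sup>2 /
                (hermite (2 * k - 1) (\<i> * of_real x) * hermite (2 * k + 1) (\<i> * of_real x))
        = (\<i> ^ Suc m * of_real (hr (Suc m) x)) ^ 2 / ((\<i> ^ m * of_real (hr m x)) * (\<i> ^ Suc (Suc m) * of_real (hr (Suc (Suc m)) x)))"
      unfolding hermite_hr m m_def[symmetric] by simp
    also have "\<dots> = (\<i> ^ Suc m) ^ 2 * of_real (hr (Suc m) x) ^ 2 / ((\<i> ^ Suc m) ^ 2 * (of_real (hr m x) * of_real (hr (Suc (Suc m)) x)))"
      by (simp add: power2_eq_square mult_ac)
    also have "\<dots> = of_real (hr (Suc m) x) ^ 2 / (of_real (hr m x) * of_real (hr (Suc (Suc m)) x))"
      by (rule mult_divide_mult_cancel_left) simp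
    also have "\<dots> = of_real (F x)" unfolding F_def m m_def[symmetric] by simp
    finally show ?thesis .
  qed
  have Fsym: "F (- y) = F y" for y
  proof -
    have e: "(-1::real) ^ (2 * k - 1) * (-1) ^ (2 * k + 1) = 1"
      by (simp add: power_add[symmetric] m)
    have e2: "((-1::real) ^ (2 * k)) ^ 2 = 1" by (simp only: power_minus1_even) simp
    show ?thesis unfolding F_def hr_neg power_mult_distrib
      using e e2 by (simp add: algebra_simps power2_eq_square)
  qed
  have "sqrt ((real k - 1/2) / (real k + 1/2)) < F x"
  proof (cases "x > 0")
    case True thus ?thesis unfolding F_def by (rule part5_pos[OF k])
  next
    case False
    hence "- x > 0" using x by simp
    hence "sqrt ((real k - 1/2) / (real k + 1/2)) < F (- x)" unfolding F_def by (rule part5_pos[OF k])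
    thus ?thesis by (simp add: Fsym)
  qed
  thus ?thesis unfolding Let_def q by simp
qed


theorem theorem15:
  shows
  "(\<forall>(k::nat) (n::real) (x::real). k \<ge> 1 \<and> 2 * real k - 1 < n \<and> n < 2 * real k \<and> x > 0 \<longrightarrow>
       pcfV n x / pcfV (n - 1) x < (x + sqrt (4 * n - 2 + x\<^sup>2)) / 2)
 \<and> (\<forall>(k::nat) (n::real) (x::real). k \<ge> 1 \<and> 2 * real k < n \<and> n < 2 * real k + 1 \<and> x > 0 \<longrightarrow>
       (x + sqrt (4 * n - 6 + x\<^sup>2)) / 2 < pcfV n x / pcfV (n - 1) x)
 \<and> (\<forall>(k::nat) (x::real). x > 0 \<longrightarrow>
       (let q = - \<i> * hermite (2 * k + 1) (\<i> * of_real x) / hermite (2 * k) (\<i> * of_real x)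
        in q \<in> \<real> \<and> Re q < x + sqrt (4 * real k + 2 + x\<^sup>2)))
 \<and> (\<forall>(k::nat) (x::real). k \<ge> 1 \<and> x > 0 \<longrightarrow>
       (let q = \<i> * hermite (2 * k - 1) (\<i> * of_real x) / hermite (2 * k) (\<i> * of_real x)
        in q \<in> \<real> \<and> Re q < inverse (x + sqrt (4 * real k - 2 + x\<^sup>2))))
 \<and> (\<forall>(k::nat) (x::real). k \<ge> 1 \<and> x \<noteq> 0 \<longrightarrow>
       (let q = (hermite (2 * k) (\<i> * of_real x))\<^sup>2 /
                (hermite (2 * k - 1) (\<i> * of_real x) * hermite (2 * k + 1) (\<i> * of_real x))
        in q \<in> \<real> \<and> Re q > sqrt ((real k - 1/2) / (real k + 1/2))))"
  proof (intro conjI)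
  show "\<forall>(k::nat) (n::real) (x::real). k \<ge> 1 \<and> 2 * real k - 1 < n \<and> n < 2 * real k \<and> x > 0 \<longrightarrow>
       pcfV n x / pcfV (n - 1) x < (x + sqrt (4 * n - 2 + x\<^sup>2)) / 2"
    using part1 by blast
  show "\<forall>(k::nat) (n::real) (x::real). k \<ge> 1 \<and> 2 * real k < n \<and> n < 2 * real k + 1 \<and> x > 0 \<longrightarrow>
       (x + sqrt (4 * n - 6 + x\<^sup>2)) / 2 < pcfV n x / pcfV (n - 1) x"
    using part2 by blast
qed (intro allI impI part3 part4 part5; simp)+

end
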